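(* The insertion-sort strategy is efficient, and hence regret-free.
   Context: Let $\mathcal{X}$ be a finite set of alternatives. A proto-ranking is an irreflexive and transitive binary relation on $\mathcal{X}$; a ranking is a total proto-ranking; a tournament is a total and asymmetric binary relation on $\mathcal{X}$. The chair has a fixed preference $\succ$, which is a ranking on $\mathcal{X}$. Interaction: given a tournament $\mathrel{W}$ (the "general will"), set $R_0=\varnothing$. In each period $t\geq 1$ in which $R_{t-1}$ is not total, the chair offers a pair $\{x,y\}$ of distinct alternatives that are unranked by $R_{t-1}$ (neither $x R_{t-1} y$ nor $y R_{t-1} x$); the winner is $x$ if $x \mathrel{W} y$ and $y$ otherwise, and $R_t$ is the transitive closure of $R_{t-1}\cup\{(\text{winner},\text{loser})\}$. The process stops when $R_t$ is total. A history is a finite sequence of ordered (winner, loser) pairs that can arise in this way (each offered pair unranked by the proto-ranking induced by the earlier pairs); it is terminal if its induced proto-ranking is total. A strategy of the chair assigns to each non-terminal history a pair of alternatives unranked at that history. The outcome of a strategy $\sigma$ under a tournament $\mathrel{W}$ is the final ranking produced. A ranking is $\mathrel{W}$-feasible if it is the outcome under $\mathrel{W}$ of some strategy. A ranking $R$ is more aligned with $\succ$ than a ranking $R'$ if for all $x,y$ with $x\succ y$, $x R' y$ implies $x R y$. A ranking is $\mathrel{W}$-unimprovable if no other $\mathrel{W}$-feasible ranking is more aligned with $\succ$ than it. A strategy is regret-free if for every tournament $\mathrel{W}$ its outcome under $\mathrel{W}$ is $\mathrel{W}$-unimprovable. A ranking $R$ is $\mathrel{W}$-efficient if $x\succ y$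 and $x\mathrel{W} y$ imply $x R y$. A strategy is efficient if for every tournament $\mathrel{W}$ its outcome under $\mathrel{W}$ is $\mathrel{W}$-efficient. The insertion-sort strategy: after a history with current proto-ranking $R$, for each $z$ let $L(z)=\{w\in\mathcal{X}: z\succ w,\ \text{neither } zRw \text{ nor } wRz\}$. Let $x$ be the $\succ$-worst alternative with $L(x)\neq\varnothing$, and $y$ the $R$-highest element of $L(x)$ (i.e. $yRz$ for all $z\in L(x)\setminus\{y\}$; this is well defined). The strategy offers $\{x,y\}$. *)

theory Defs
  imports Main
begin

text \<open>Alternatives: the universe of a finite type 'a. Relations are sets of pairs.
  A pair (x,y) in R means x R y.\<close>

definition proto_ranking :: "('a \<times> 'a) set \<Rightarrow> bool" where
  "proto_ranking R \<longleftrightarrow> irrefl R \<and> trans R"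

definition ranking :: "('a \<times> 'a) set \<Rightarrow> bool" where
  "ranking R \<longleftrightarrow> proto_ranking R \<and> total R"

definition tournament :: "('a \<times> 'a) set \<Rightarrow> bool" where
  "tournament W \<longleftrightarrow> total W \<and> asym W"

definition unranked :: "('a \<times> 'a) set \<Rightarrow> 'a \<Rightarrow> 'a \<Rightarrow> bool" where
  "unranked R x y \<longleftrightarrow> (x, y) \<notin> R \<and> (y, x) \<notin> R"

text \<open>A history is a list of (winner, loser) pairs; its induced proto-ranking
  is the transitive closure of the set of these pairs.\<close>

definition induced :: "('a \<times> 'a) list \<Rightarrow> ('a \<times> 'a) set" where
  "induced h = trancl (set h)"

inductive is_history :: "('a \<times> 'a) list \<Rightarrow> bool" where
  Nil: "is_history []"
| snoc: "is_history h \<Longrightarrow> w \<noteq> l \<Longrightarrow> unranked (induced h) w l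
           \<Longrightarrow> is_history (h @ [(w, l)])"

definition terminal :: "('a \<times> 'a) list \<Rightarrow> bool" where
  "terminal h \<longleftrightarrow> total (induced h)"

definition is_strategy :: "(('a \<times> 'a) list \<Rightarrow> 'a \<times> 'a) \<Rightarrow> bool" where
  "is_strategy \<sigma> \<longleftrightarrow> (\<forall>h. is_history h \<and> \<not> terminal h \<longrightarrow>
      fst (\<sigma> h) \<noteq> snd (\<sigma> h) \<and> unranked (induced h) (fst (\<sigma> h)) (snd (\<sigma> h)))"

definition contest :: "('a \<times> 'a) set \<Rightarrow> 'a \<times> 'a \<Rightarrow> 'a \<times> 'a" where
  "contest W p = (if p \<in> W then p else (snd p, fst p))"

primrec play :: "(('a \<times> 'a) list \<Rightarrow> 'a \<times> 'a) \<Rightarrow> ('a \<times> 'a) set \<Rightarrow> nat \<Rightarrow> ('a \<times> 'a) list" where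
  "play \<sigma> W 0 = []"
| "play \<sigma> W (Suc n) = (let h = play \<sigma> W n in
     if terminal h then h else h @ [contest W (\<sigma> h)])"

definition outcome :: "(('a \<times> 'a) list \<Rightarrow> 'a \<times> 'a) \<Rightarrow> ('a \<times> 'a) set \<Rightarrow> ('a \<times> 'a) set" where
  "outcome \<sigma> W = induced (play \<sigma> W (LEAST n. terminal (play \<sigma> W n)))"

definition feasible :: "('a \<times> 'a) set \<Rightarrow> ('a \<times> 'a) set \<Rightarrow> bool" where
  "feasible W R \<longleftrightarrow> ranking R \<and> (\<exists>\<sigma>. is_strategy \<sigma> \<and> outcome \<sigma> W = R)"

definition more_aligned :: "('a \<times> 'a) set \<Rightarrow> ('a \<times> 'a) set \<Rightarrow> ('a \<times> 'a) set \<Rightarrow> bool" where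
  "more_aligned P R R' \<longleftrightarrow> (\<forall>x y. (x, y) \<in> P \<longrightarrow> (x, y) \<in> R' \<longrightarrow> (x, y) \<in> R)"

definition unimprovable :: "('a \<times> 'a) set \<Rightarrow> ('a \<times> 'a) set \<Rightarrow> ('a \<times> 'a) set \<Rightarrow> bool" where
  "unimprovable P W R \<longleftrightarrow>
     (\<forall>R'. feasible W R' \<and> R' \<noteq> R \<longrightarrow> \<not> more_aligned P R' R)"

definition regret_free :: "('a \<times> 'a) set \<Rightarrow> (('a \<times> 'a) list \<Rightarrow> 'a \<times> 'a) \<Rightarrow> bool" where
  "regret_free P \<sigma> \<longleftrightarrow> (\<forall>W. tournament W \<longrightarrow> unimprovable P W (outcome \<sigma> W))"

definition W_efficient :: "('a \<times> 'a) set \<Rightarrow> ('a \<times> 'a) set \<Rightarrow> ('a \<times> 'a) set \<Rightarrow> bool" where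
  "W_efficient P W R \<longleftrightarrow> (\<forall>x y. (x, y) \<in> P \<and> (x, y) \<in> W \<longrightarrow> (x, y) \<in> R)"

definition efficient :: "('a \<times> 'a) set \<Rightarrow> (('a \<times> 'a) list \<Rightarrow> 'a \<times> 'a) \<Rightarrow> bool" where
  "efficient P \<sigma> \<longleftrightarrow> (\<forall>W. tournament W \<longrightarrow> W_efficient P W (outcome \<sigma> W))"

definition Lset :: "('a \<times> 'a) set \<Rightarrow> ('a \<times> 'a) set \<Rightarrow> 'a \<Rightarrow> 'a set" where
  "Lset P R z = {w. (z, w) \<in> P \<and> unranked R z w}"

definition insertion_sort :: "('a \<times> 'a) set \<Rightarrow> ('a \<times> 'a) list \<Rightarrow> 'a \<times> 'a" where
  "insertion_sort P h =
     (let R = induced h;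
          x = (THE x. Lset P R x \<noteq> {} \<and>
                 (\<forall>z. Lset P R z \<noteq> {} \<and> z \<noteq> x \<longrightarrow> (z, x) \<in> P));
          y = (THE y. y \<in> Lset P R x \<and> (\<forall>z \<in> Lset P R x - {y}. (y, z) \<in> R))
      in (x, y))"

end

theory Submission
  imports Defs
begin

lemma rk: assumes "ranking P"
  shows "\<And>a. (a,a) \<notin> P" "\<And>a b c. (a,b) \<in> P \<Longrightarrow> (b,c) \<in> P \<Longrightarrow> (a,c) \<in> P"
    "\<And>a b. a \<noteq> b \<Longrightarrow> (a,b) \<in> P \<or> (b,a) \<in> P"
    "\<And>a b. (a,b) \<in> P \<Longrightarrow> (b,a) \<notin> P"
  using assms unfolding ranking_def proto_ranking_def irrefl_on_def trans_def total_on_def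
  by blast+

lemma trancl_insert_trans:
  assumes "trans R"
  shows "(a,b) \<in> (insert (w,l) R)\<^sup>+ \<longleftrightarrow> (a,b) \<in> R \<or> ((a = w \<or> (a,w) \<in> R) \<and> (l = b \<or> (l,b) \<in> R))"
proof -
  have 1: "R\<^sup>+ = R" using assms by simp
  have 2: "R\<^sup>* = R\<^sup>=" using 1 rtrancl_trancl_reflcl by metis
  show ?thesis unfolding trancl_insert 1 2 by blast
qed

lemma induced_snoc: "induced (h @ [p]) = (insert p (induced h))\<^sup>+"
proof -
  obtain w l where p: "p = (w,l)" by force
  show ?thesis unfolding induced_def p
    by (simp add: trancl_insert rtrancl_trancl_reflcl[symmetric])
qed

lemma history_irrefl: "is_history h \<Longrightarrow> irrefl (induced h)"
proof (induction rule: is_history.induct)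
  case Nil then show ?case by (simp add: induced_def irrefl_on_def)
next
  case (snoc h w l)
  have tr: "trans (induced h)" by (simp add: induced_def)
  show ?case unfolding induced_snoc irrefl_on_def
  proof (clarify)
    fix a assume "(a,a) \<in> (insert (w,l) (induced h))\<^sup>+"
    then have "(a,a) \<in> induced h \<or> ((a = w \<or> (a,w) \<in> induced h) \<and> (l = a \<or> (l,a) \<in> induced h))"
      using trancl_insert_trans[OF tr] by blast
    then show False using snoc tr unfolding unranked_def irrefl_on_def trans_def by blast
  qed
qed

definition xsel where "xsel P R = (THE x. Lset P R x \<noteq> {} \<and>
                 (\<forall>z. Lset P R z \<noteq> {} \<and> z \<noteq> x \<longrightarrow> (z, x) \<in> P))"
definition ysel where "ysel P R x = (THE y. y \<in> Lset P R x \<and> (\<forall>z \<in> Lset P R x - {y}. (y, z) \<in> R))"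

lemma ins_eq: "insertion_sort P h = (xsel P (induced h), ysel P (induced h) (xsel P (induced h)))"
  by (simp add: insertion_sort_def xsel_def ysel_def Let_def)

lemma wf_strict:
  fixes R :: "('a::finite \<times> 'a) set"
  assumes "\<And>a. (a,a) \<notin> R" "trans R"
  shows "wf R"
proof -
  have "acyclic R" unfolding acyclic_def using assms by simp
  then show ?thesis by (intro finite_acyclic_wf) auto
qed

lemma xsel_props:
  fixes P :: "('a::finite \<times> 'a) set"
  assumes P: "ranking P" and z0: "Lset P R z0 \<noteq> {}"
  shows "Lset P R (xsel P R) \<noteq> {} \<and> (\<forall>z. Lset P R z \<noteq> {} \<and> z \<noteq> xsel P R \<longrightarrow> (z, xsel P R) \<in> P)"
proof -
  have t1: "\<And>a. (a,a) \<notin> P\<inverse>" using rk(1)[OF P] by simp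
  have t2: "trans (P\<inverse>)" unfolding trans_def using rk(2)[OF P] by blast
  have "wf (P\<inverse>)" using t1 t2 by (rule wf_strict)
  then obtain x where x: "x \<in> {z. Lset P R z \<noteq> {}}" "\<And>y. (y,x) \<in> P\<inverse> \<Longrightarrow> y \<notin> {z. Lset P R z \<noteq> {}}"
    using wfE_min[of "P\<inverse>" z0 "{z. Lset P R z \<noteq> {}}"] z0 by blast
  have ex: "Lset P R x \<noteq> {} \<and> (\<forall>z. Lset P R z \<noteq> {} \<and> z \<noteq> x \<longrightarrow> (z, x) \<in> P)"
    using x rk(3)[OF P] by blast
  have "\<exists>!x. Lset P R x \<noteq> {} \<and> (\<forall>z. Lset P R z \<noteq> {} \<and> z \<noteq> x \<longrightarrow> (z, x) \<in> P)"
    using ex rk(4)[OF P] by blast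
  then show ?thesis unfolding xsel_def by (rule theI')
qed

lemma ysel_props:
  fixes P :: "('a::finite \<times> 'a) set"
  assumes P: "ranking P" and irr: "irrefl R" and tr: "trans R" and Lx: "Lset P R x \<noteq> {}"
    and xm: "\<forall>z. Lset P R z \<noteq> {} \<and> z \<noteq> x \<longrightarrow> (z, x) \<in> P"
  shows "ysel P R x \<in> Lset P R x \<and> (\<forall>z\<in>Lset P R x - {ysel P R x}. (ysel P R x, z) \<in> R)"
proof -
  have chain: "(u,v) \<in> R \<or> (v,u) \<in> R" if "u \<in> Lset P R x" "v \<in> Lset P R x" "u \<noteq> v" for u v
  proof -
    have xu: "(x,u) \<in> P" "(x,v) \<in> P" using that by (auto simp: Lset_def)
    show ?thesis
    proof (cases "(u,v) \<in> P")
      case True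
      have "Lset P R u = {}" using xm xu rk(1)[OF P] rk(4)[OF P] by blast
      then show ?thesis using True by (auto simp: Lset_def unranked_def)
    next
      case False
      then have "(v,u) \<in> P" using rk(3)[OF P] that by blast
      moreover have "Lset P R v = {}" using xm xu rk(1)[OF P] rk(4)[OF P] by blast
      ultimately show ?thesis by (auto simp: Lset_def unranked_def)
    qed
  qed
  have irr': "\<And>a. (a,a) \<notin> R" using irr by (simp add: irrefl_on_def)
  have "wf R" using irr' tr by (rule wf_strict)
  obtain y0 where y0: "y0 \<in> Lset P R x" using Lx by blast
  obtain y where y: "y \<in> Lset P R x" "\<And>z. (z,y) \<in> R \<Longrightarrow> z \<notin> Lset P R x"
    using wfE_min[OF \<open>wf R\<close> y0] by blast
  have ex: "y \<in> Lset P R x \<and> (\<forall>z\<in>Lset P R x - {y}. (y, z) \<in> R)"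
    using y chain by blast
  have "\<exists>!y. y \<in> Lset P R x \<and> (\<forall>z\<in>Lset P R x - {y}. (y, z) \<in> R)"
  proof (rule ex1I)
    show "y \<in> Lset P R x \<and> (\<forall>z\<in>Lset P R x - {y}. (y, z) \<in> R)" by (rule ex)
  next
    fix y' assume "y' \<in> Lset P R x \<and> (\<forall>z\<in>Lset P R x - {y'}. (y', z) \<in> R)"
    then show "y' = y" using ex irr' tr unfolding trans_def by blast
  qed
  then show ?thesis unfolding ysel_def by (rule theI')
qed


definition J where "J P R \<longleftrightarrow> (\<forall>a b c. (a,b) \<in> R \<and> ((a,c) \<in> P \<or> (b,c) \<in> P) \<longrightarrow> Lset P R c = {})"
definition E where "E P W R \<longleftrightarrow> (\<forall>a b. (a,b) \<in> R \<and> (b,a) \<in> P \<longrightarrow> (a,b) \<in> W)"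

lemma contest_props:
  assumes W: "tournament W" and ne: "a \<noteq> b"
  shows "contest W (a,b) \<in> W \<and> (contest W (a,b) = (a,b) \<or> contest W (a,b) = (b,a))"
proof (cases "(a,b) \<in> W")
  case True then show ?thesis by (simp add: contest_def)
next
  case False
  have "total W" using W by (simp add: tournament_def)
  then have "(b,a) \<in> W" using False ne unfolding total_on_def by blast
  then show ?thesis using False by (simp add: contest_def)
qed

lemma exists_L:
  assumes P: "ranking P" and nt: "\<not> total R"
  shows "\<exists>z. Lset P R z \<noteq> {}"
proof -
  obtain u v where "u \<noteq> v" "(u,v) \<notin> R" "(v,u) \<notin> R" using nt unfolding total_on_def by blast
  then show ?thesis using rk(3)[OF P, of u v] unfolding Lset_def unranked_def by blast
qed

lemma step:
  fixes P :: "('a::finite \<times> 'a) set"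
  assumes P: "ranking P" and W: "tournament W" and irr: "irrefl R" and tr: "trans R"
    and nt: "\<not> total R" and J: "J P R" and E: "E P W R"
    and xd: "x = xsel P R" and yd: "y = ysel P R (xsel P R)"
  shows "x \<noteq> y \<and> unranked R x y \<and> J P ((insert (contest W (x,y)) R)\<^sup>+)
     \<and> E P W ((insert (contest W (x,y)) R)\<^sup>+)"
proof -
  have irr': "\<And>a. (a,a) \<notin> R" using irr by (simp add: irrefl_on_def)
  have trR: "\<And>a b c. (a,b) \<in> R \<Longrightarrow> (b,c) \<in> R \<Longrightarrow> (a,c) \<in> R" using tr unfolding trans_def by blast
  note pr = rk[OF P]
  obtain z0 where "Lset P R z0 \<noteq> {}" using exists_L[OF P nt] by blast
  from xsel_props[OF P this] have Lx: "Lset P R x \<noteq> {}"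
    and xm: "\<forall>z. Lset P R z \<noteq> {} \<and> z \<noteq> x \<longrightarrow> (z, x) \<in> P" unfolding xd by auto
  from ysel_props[OF P irr tr Lx xm] have yL: "y \<in> Lset P R x"
    and ym: "\<forall>z\<in>Lset P R x - {y}. (y, z) \<in> R" unfolding xd yd by auto
  have xyP: "(x,y) \<in> P" and ur: "unranked R x y" using yL by (auto simp: Lset_def)
  have xy: "x \<noteq> y" using xyP pr(1) by blast
  have below: "Lset P R c = {}" if "(x,c) \<in> P" for c
    using that xm pr(1) pr(4) by blast
  have touched: "(a = x \<or> (x,a) \<in> P) \<and> (b = x \<or> (x,b) \<in> P)" if "(a,b) \<in> R" for a b
  proof -
    have "a = x \<or> (x,a) \<in> P"
    proof (rule ccontr)
      assume "\<not> ?thesis" then have "(a,x) \<in> P" using pr(3) by blast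
      then have "Lset P R x = {}" using J that unfolding J_def by blast
      then show False using Lx by simp
    qed
    moreover have "b = x \<or> (x,b) \<in> P"
    proof (rule ccontr)
      assume "\<not> ?thesis" then have "(b,x) \<in> P" using pr(3) by blast
      then have "Lset P R x = {}" using J that unfolding J_def by blast
      then show False using Lx by simp
    qed
    ultimately show ?thesis by blast
  qed
  have chainB: "(u,v) \<in> R \<or> (v,u) \<in> R" if "(x,u) \<in> P" "(x,v) \<in> P" "u \<noteq> v" for u v
  proof (cases "(u,v) \<in> P")
    case True
    have "Lset P R u = {}" using below that by blast
    then show ?thesis using True by (auto simp: Lset_def unranked_def)
  next
    case False
    then have "(v,u) \<in> P" using pr(3) that by blast
    moreover have "Lset P R v = {}" using below that by blast
    ultimately show ?thesis by (auto simp: Lset_def unranked_def)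
  qed
  have urxy: "(x,y) \<notin> R" "(y,x) \<notin> R" using ur by (auto simp: unranked_def)
  obtain w l where wl: "contest W (x,y) = (w,l)" "(w,l) \<in> W"
    "(w = x \<and> l = y) \<or> (w = y \<and> l = x)" "(x,y) \<in> W \<Longrightarrow> w = x \<and> l = y"
  proof (cases "(x,y) \<in> W")
    case True
    then have "contest W (x,y) = (x,y)" by (simp add: contest_def)
    then show ?thesis using that True by blast
  next
    case False
    then have c: "contest W (x,y) = (y,x)" by (simp add: contest_def)
    then have "(y,x) \<in> W" using contest_props[OF W xy] by simp
    then show ?thesis using that c False by blast
  qed
  let ?R' = "(insert (w,l) R)\<^sup>+"
  have mem: "(a,b) \<in> ?R' \<longleftrightarrow> (a,b) \<in> R \<or> ((a = w \<or> (a,w) \<in> R) \<and> (l = b \<or> (l,b) \<in> R))" for a b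
    by (rule trancl_insert_trans[OF tr])
  have sub: "R \<subseteq> ?R'" using mem by auto
  have Lmono: "Lset P ?R' c \<subseteq> Lset P R c" for c
    using sub by (auto simp: Lset_def unranked_def)
  have newtouch: "(a = x \<or> (x,a) \<in> P) \<and> (b = x \<or> (x,b) \<in> P)"
    if "(a = w \<or> (a,w) \<in> R) \<and> (l = b \<or> (l,b) \<in> R)" for a b
  proof -
    have A: "a = x \<or> a = y \<or> (a,x) \<in> R \<or> (a,y) \<in> R" using that wl(3) by blast
    have B: "b = x \<or> b = y \<or> (x,b) \<in> R \<or> (y,b) \<in> R" using that wl(3) by blast
    have "a = x \<or> (x,a) \<in> P" using A
    proof (elim disjE)
      assume "(a,x) \<in> R" then show ?thesis using touched by blast
    next
      assume "(a,y) \<in> R" then show ?thesis using touched by blast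
    qed (use xyP in auto)
    moreover have "b = x \<or> (x,b) \<in> P" using B
    proof (elim disjE)
      assume "(x,b) \<in> R" then show ?thesis using touched by blast
    next
      assume "(y,b) \<in> R" then show ?thesis using touched by blast
    qed (use xyP in auto)
    ultimately show ?thesis by blast
  qed
  have JR': "J P ?R'"
    unfolding J_def
  proof (intro allI impI)
    fix a b c assume H: "(a,b) \<in> ?R' \<and> ((a,c) \<in> P \<or> (b,c) \<in> P)"
    show "Lset P ?R' c = {}"
    proof (cases "(a,b) \<in> R")
      case True
      then have "Lset P R c = {}" using J H unfolding J_def by blast
      then show ?thesis using Lmono by blast
    next
      case False
      then have "(a = w \<or> (a,w) \<in> R) \<and> (l = b \<or> (l,b) \<in> R)" using H mem by blast
      then have "(a = x \<or> (x,a) \<in> P) \<and> (b = x \<or> (x,b) \<in> P)" by (rule newtouch)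
      then have "(x,c) \<in> P" using H pr(2) by blast
      then show ?thesis using below Lmono by blast
    qed
  qed
  have ER': "E P W ?R'"
    unfolding E_def
  proof (intro allI impI)
    fix a b assume H: "(a,b) \<in> ?R' \<and> (b,a) \<in> P"
    have ER: "(a,b) \<in> R \<Longrightarrow> (a,b) \<in> W" using E H unfolding E_def by blast
    show "(a,b) \<in> W"
    proof (cases "(a,b) \<in> R")
      case True then show ?thesis using ER by blast
    next
      case False
      then have new: "(a = w \<or> (a,w) \<in> R) \<and> (l = b \<or> (l,b) \<in> R)" using H mem by blast
      show ?thesis
      proof (cases "w = x \<and> l = y")
        case True
        have ay: "(a,y) \<in> R" if "(a,x) \<in> R" for a
        proof -
          have "a \<noteq> x" using that irr' by blast
          then have "(x,a) \<in> P" using touched[OF that] by blast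
          moreover have "a \<noteq> y" using that urxy by blast
          ultimately have "(a,y) \<in> R \<or> (y,a) \<in> R" using chainB xyP by blast
          then show ?thesis using that urxy trR by blast
        qed
        show ?thesis
        proof (cases "a = x")
          case ax: True
          have "b = y \<or> (y,b) \<in> R" using new True by blast
          then show ?thesis
          proof
            assume "b = y" then show ?thesis using H ax xyP pr(4) by blast
          next
            assume yb: "(y,b) \<in> R"
            then have "b = x \<or> (x,b) \<in> P" using touched by blast
            then show ?thesis using yb urxy H ax pr(4) by blast
          qed
        next
          case anx: False
          then have ax: "(a,x) \<in> R" using new True by blast
          then have "(a,y) \<in> R" by (rule ay)
          then have "(a,b) \<in> R" using new True trR by blast
          then show ?thesis using False by blast
        qed
      next
        case nt2: False
        then have wy: "w = y" "l = x" using wl(3) by auto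
        have ax: "(a,x) \<in> R" if "(a,y) \<in> R" for a
        proof -
          have "a \<noteq> x" using that urxy by blast
          then have xa: "(x,a) \<in> P" using touched[OF that] by blast
          have "a \<noteq> y" using that irr' by blast
          have "\<not> unranked R x a"
          proof
            assume "unranked R x a"
            then have "a \<in> Lset P R x" using xa by (simp add: Lset_def)
            then have "(y,a) \<in> R" using ym \<open>a \<noteq> y\<close> by blast
            then show False using that trR irr' by blast
          qed
          then show ?thesis using urxy that trR unfolding unranked_def by blast
        qed
        show ?thesis
        proof (cases "a = y")
          case ay: True
          have "b = x \<or> (x,b) \<in> R" using new wy by blast
          then show ?thesis
          proof
            assume "b = x" then show ?thesis using ay wl wy by simp
          next
            assume xb: "(x,b) \<in> R"
            then have "b \<noteq> x" using irr' by blast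
            then have "(x,b) \<in> P" using touched[OF xb] by blast
            moreover have "b \<noteq> y" using xb urxy by blast
            ultimately have "(y,b) \<in> R \<or> (b,y) \<in> R" using chainB xyP by blast
            then have "(y,b) \<in> R" using xb trR urxy by blast
            then show ?thesis using False ay by blast
          qed
        next
          case any: False
          then have "(a,y) \<in> R" using new wy by blast
          then have axR: "(a,x) \<in> R" by (rule ax)
          then have "(a,b) \<in> R" using new wy trR by blast
          then show ?thesis using False by blast
        qed
      qed
    qed
  qed
  show ?thesis unfolding wl(1) using xy ur JR' ER' by blast
qed


lemma play_gen:
  fixes \<sigma> :: "('a::finite \<times> 'a) list \<Rightarrow> 'a \<times> 'a"
  assumes S: "is_strategy \<sigma>" and W: "tournament W"
  shows "is_history (play \<sigma> W n) \<and> set (play \<sigma> W n) \<subseteq> W \<and>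
    (\<not> terminal (play \<sigma> W n) \<longrightarrow> n \<le> card (induced (play \<sigma> W n)))"
proof (induction n)
  case 0 show ?case by (simp add: is_history.Nil)
next
  case (Suc n)
  let ?h = "play \<sigma> W n"
  show ?case
  proof (cases "terminal ?h")
    case True then show ?thesis using Suc by (simp add: Let_def)
  next
    case False
    have sp: "fst (\<sigma> ?h) \<noteq> snd (\<sigma> ?h)" "unranked (induced ?h) (fst (\<sigma> ?h)) (snd (\<sigma> ?h))"
      using S Suc False unfolding is_strategy_def by blast+
    obtain a b where ab: "\<sigma> ?h = (a,b)" by force
    then have ne: "a \<noteq> b" and ur: "unranked (induced ?h) a b" using sp by auto
    obtain w l where c: "contest W (a,b) = (w,l)" by force
    have cW: "(w,l) \<in> W" and wl: "(w,l) = (a,b) \<or> (w,l) = (b,a)"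
      using contest_props[OF W ne] c by auto
    have wl2: "w \<noteq> l" "unranked (induced ?h) w l" using wl ne ur by (auto simp: unranked_def)
    have eq: "play \<sigma> W (Suc n) = ?h @ [(w,l)]" using False ab c by (simp add: Let_def)
    have hist: "is_history (?h @ [(w,l)])" using Suc wl2 by (intro is_history.snoc) auto
    have ps: "induced ?h \<subset> induced (?h @ [(w,l)])"
    proof -
      have "insert (w,l) (induced ?h) \<subseteq> induced (?h @ [(w,l)])"
        unfolding induced_snoc by (auto intro: r_into_trancl')
      moreover have "(w,l) \<notin> induced ?h" using wl2 by (simp add: unranked_def)
      ultimately show ?thesis by blast
    qed
    have card: "card (induced ?h) < card (induced (?h @ [(w,l)]))"
      by (rule psubset_card_mono[OF _ ps]) simp
    show ?thesis using eq hist Suc cW card False by auto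
  qed
qed

lemma terminates:
  fixes \<sigma> :: "('a::finite \<times> 'a) list \<Rightarrow> 'a \<times> 'a"
  assumes S: "is_strategy \<sigma>" and W: "tournament W"
  shows "\<exists>n. terminal (play \<sigma> W n)"
proof (rule ccontr)
  assume "\<not> ?thesis"
  then have nt: "\<not> terminal (play \<sigma> W (Suc (card (UNIV :: ('a \<times> 'a) set))))" by blast
  have "card (induced (play \<sigma> W (Suc (card (UNIV :: ('a \<times> 'a) set))))) \<le> card (UNIV :: ('a \<times> 'a) set)"
    by (rule card_mono) simp_all
  then show False using play_gen[OF S W, of "Suc (card (UNIV :: ('a \<times> 'a) set))"] nt by simp
qed

lemma outcome_props:
  fixes \<sigma> :: "('a::finite \<times> 'a) list \<Rightarrow> 'a \<times> 'a"
  assumes S: "is_strategy \<sigma>" and W: "tournament W"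
  shows "\<exists>n. outcome \<sigma> W = induced (play \<sigma> W n) \<and> terminal (play \<sigma> W n)"
proof -
  have "terminal (play \<sigma> W (LEAST n. terminal (play \<sigma> W n)))"
    using terminates[OF S W] by (rule LeastI_ex)
  then show ?thesis unfolding outcome_def by blast
qed

lemma strat_ok:
  fixes P :: "('a::finite \<times> 'a) set"
  assumes P: "ranking P" and irr: "irrefl R" and tr: "trans R" and nt: "\<not> total R"
  shows "xsel P R \<noteq> ysel P R (xsel P R) \<and> unranked R (xsel P R) (ysel P R (xsel P R))"
proof -
  obtain z0 where "Lset P R z0 \<noteq> {}" using exists_L[OF P nt] by blast
  from xsel_props[OF P this] have Lx: "Lset P R (xsel P R) \<noteq> {}"
    and xm: "\<forall>z. Lset P R z \<noteq> {} \<and> z \<noteq> xsel P R \<longrightarrow> (z, xsel P R) \<in> P" by auto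
  from ysel_props[OF P irr tr Lx xm] have yL: "ysel P R (xsel P R) \<in> Lset P R (xsel P R)" by auto
  then show ?thesis using rk(1)[OF P] by (auto simp: Lset_def)
qed

lemma is_strat:
  fixes P :: "('a::finite \<times> 'a) set"
  assumes P: "ranking P"
  shows "is_strategy (insertion_sort P)"
  unfolding is_strategy_def
proof (intro allI impI)
  fix h :: "('a \<times> 'a) list" assume h: "is_history h \<and> \<not> terminal h"
  have "irrefl (induced h)" using history_irrefl h by blast
  moreover have "trans (induced h)" by (simp add: induced_def)
  moreover have "\<not> total (induced h)" using h by (simp add: terminal_def)
  ultimately show "fst (insertion_sort P h) \<noteq> snd (insertion_sort P h) \<and>
     unranked (induced h) (fst (insertion_sort P h)) (snd (insertion_sort P h))"
    using strat_ok[OF P] by (simp add: ins_eq)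
qed

lemma play_inv:
  fixes P :: "('a::finite \<times> 'a) set"
  assumes P: "ranking P" and W: "tournament W"
  shows "J P (induced (play (insertion_sort P) W n)) \<and> E P W (induced (play (insertion_sort P) W n))"
proof (induction n)
  case 0 show ?case by (simp add: induced_def J_def E_def)
next
  case (Suc n)
  define h where "h = play (insertion_sort P) W n"
  show ?case
  proof (cases "terminal h")
    case True
    then have eqT: "play (insertion_sort P) W (Suc n) = play (insertion_sort P) W n"
      by (simp add: h_def Let_def)
    show ?thesis unfolding eqT using Suc .
  next
    case False
    define R where "R = induced h"
    have hist: "is_history h" using play_gen[OF is_strat[OF P] W] by (simp add: h_def)
    have JE: "J P R" "E P W R" using Suc by (simp_all add: h_def R_def)
    have irr: "irrefl R" using history_irrefl[OF hist] by (simp add: R_def)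
    have tr: "trans R" by (simp add: R_def induced_def)
    have nt: "\<not> total R" using False by (simp add: R_def terminal_def)
    have st: "J P ((insert (contest W (xsel P R, ysel P R (xsel P R))) R)\<^sup>+)
       \<and> E P W ((insert (contest W (xsel P R, ysel P R (xsel P R))) R)\<^sup>+)"
      using step[OF P W irr tr nt JE(1) JE(2) refl refl] by blast
    have eq: "play (insertion_sort P) W (Suc n) = h @ [contest W (xsel P R, ysel P R (xsel P R))]"
      using False by (simp add: h_def[symmetric] Let_def ins_eq R_def)
    show ?thesis unfolding eq induced_snoc R_def[symmetric] using st by blast
  qed
qed

theorem theorem1:
  fixes P :: "('a::finite \<times> 'a) set"
  assumes "ranking P"
  shows "is_strategy (insertion_sort P) \<and> efficient P (insertion_sort P)
         \<and> regret_free P (insertion_sort P)"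
proof -
  note P = assms
  have S: "is_strategy (insertion_sort P)" by (rule is_strat[OF P])
  have main: "W_efficient P W (outcome (insertion_sort P) W) \<and> irrefl (outcome (insertion_sort P) W)
     \<and> trans (outcome (insertion_sort P) W) \<and> total (outcome (insertion_sort P) W)"
    if W: "tournament W" for W
  proof -
    obtain n where n: "outcome (insertion_sort P) W = induced (play (insertion_sort P) W n)"
      "terminal (play (insertion_sort P) W n)" using outcome_props[OF S W] by blast
    define R where "R = outcome (insertion_sort P) W"
    have tot: "total R" using n by (simp add: R_def terminal_def)
    have irr: "irrefl R" unfolding R_def n(1) using history_irrefl play_gen[OF S W] by blast
    have tr: "trans R" using n by (simp add: R_def induced_def)
    have E: "E P W R" using play_inv[OF P W] n by (simp add: R_def)
    have "W_efficient P W R" unfolding W_efficient_def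
    proof (intro allI impI)
      fix x y assume H: "(x,y) \<in> P \<and> (x,y) \<in> W"
      then have "x \<noteq> y" using rk(1)[OF P] by blast
      then have "(x,y) \<in> R \<or> (y,x) \<in> R" using tot unfolding total_on_def by blast
      moreover have "(y,x) \<notin> R"
      proof
        assume "(y,x) \<in> R"
        then have "(y,x) \<in> W" using E H unfolding E_def by blast
        then show False using H W unfolding tournament_def asym_on_def by blast
      qed
      ultimately show "(x,y) \<in> R" by blast
    qed
    then show ?thesis using irr tr tot by (simp add: R_def)
  qed
  have eff: "efficient P (insertion_sort P)" unfolding efficient_def using main by blast
  have rf: "regret_free P (insertion_sort P)" unfolding regret_free_def unimprovable_def
  proof (intro allI impI notI)
    fix W R' assume W: "tournament W" and F: "feasible W R' \<and> R' \<noteq> outcome (insertion_sort P) W"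
      and MA: "more_aligned P R' (outcome (insertion_sort P) W)"
    define R where "R = outcome (insertion_sort P) W"
    have Rp: "W_efficient P W R" "irrefl R" "trans R" "total R" using main[OF W] by (simp_all add: R_def)
    have irrR: "\<And>a. (a,a) \<notin> R" using Rp(2) by (simp add: irrefl_on_def)
    have trR: "\<And>a b c. (a,b) \<in> R \<Longrightarrow> (b,c) \<in> R \<Longrightarrow> (a,c) \<in> R" using Rp(3) unfolding trans_def by blast
    obtain \<sigma>' where s': "is_strategy \<sigma>'" "outcome \<sigma>' W = R'" and rk': "ranking R'"
      using F unfolding feasible_def by blast
    obtain m where m: "R' = induced (play \<sigma>' W m)" using outcome_props[OF s'(1) W] s'(2) by blast
    define S' where "S' = set (play \<sigma>' W m)"
    have S'W: "S' \<subseteq> W" using play_gen[OF s'(1) W] by (simp add: S'_def)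
    have R'eq: "R' = S'\<^sup>+" using m by (simp add: S'_def induced_def)
    note pr' = rk[OF rk']
    have sub: "S' \<subseteq> R"
    proof
      fix p assume p: "p \<in> S'"
      obtain u v where uv: "p = (u,v)" by force
      have uvR': "(u,v) \<in> R'" using p uv R'eq by auto
      then have "u \<noteq> v" using pr'(1) by blast
      show "p \<in> R"
      proof (rule ccontr)
        assume "p \<notin> R"
        then have vu: "(v,u) \<in> R" using Rp(4) \<open>u \<noteq> v\<close> uv unfolding total_on_def by blast
        show False
        proof (cases "(v,u) \<in> P")
          case True
          then have "(v,u) \<in> R'" using MA vu unfolding more_aligned_def R_def by blast
          then show ?thesis using uvR' pr'(4) by blast
        next
          case False
          then have "(u,v) \<in> P" using rk(3)[OF P] \<open>u \<noteq> v\<close> by blast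
          moreover have "(u,v) \<in> W" using S'W p uv by blast
          ultimately have "(u,v) \<in> R" using Rp(1) unfolding W_efficient_def by blast
          then show ?thesis using \<open>p \<notin> R\<close> uv by blast
        qed
      qed
    qed
    have R'R: "R' \<subseteq> R"
    proof (clarify)
      fix a b assume "(a,b) \<in> R'"
      then have "(a,b) \<in> S'\<^sup>+" using R'eq by simp
      then show "(a,b) \<in> R"
      proof (induction rule: trancl_induct)
        case (base y) then show ?case using sub by blast
      next
        case (step y z) then show ?case using sub trR by blast
      qed
    qed
    have "R \<subseteq> R'"
    proof
      fix p assume p: "p \<in> R"
      obtain a b where ab: "p = (a,b)" by force
      have "a \<noteq> b" using p ab irrR by blast
      then have "(a,b) \<in> R' \<or> (b,a) \<in> R'" using pr'(3) by blast
      then show "p \<in> R'" using R'R p ab irrR trR by blast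
    qed
    then have "R = R'" using R'R by blast
    then show False using F R_def by simp
  qed
  show ?thesis using S eff rf by blast
qed

end
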